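(* Consider two settings $(a,c,P,\phi)$ and $(a',c',P',\phi)$ as described in the context. Suppose $a\ge a'$, $c\le c'$, and either $\widetilde P\ge_{FOSD}\widetilde{P'}$ (for the degree marginals) or the degree marginal of $P$ is a mean-preserving spread of that of $P'$, with at least one of these relations strict. Then for every $\theta_i\in\Theta$ and all $d_i>d_i'$ in $D$, $$x^{friend}_{a,c,P}(\theta_i,d_i)-x^{friend}_{a,c,P}(\theta_i,d_i')>x^{friend}_{a',c',P'}(\theta_i,d_i)-x^{friend}_{a',c',P'}(\theta_i,d_i')$$ and $$U^{friend}_{a,c,P}(\theta_i,d_i)-U^{friend}_{a,c,P}(\theta_i,d_i')>U^{friend}_{a',c',P'}(\theta_i,d_i)-U^{friend}_{a',c',P'}(\theta_i,d_i').$$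
   Context: Fix an integer $n\ge2$, $\phi\in\mathbb{R}$, a compact set $\Theta\subset[0,\infty)$ of types, and $D=\{1,\dots,n-1\}$. A setting $(a,c,P,\phi)$ consists of $a>0$, $c>0$ and a probability distribution $P$ on $\Theta\times D$ (joint type/degree distribution of a generic potential neighbor); $\mathrm{E}_P$ is expectation under $P$, and the neighbor distribution $\widetilde P$ is given by $\widetilde{\mathrm{E}}_P[h(\theta,d)]=\mathrm{E}_P[d\,h(\theta,d)]/\mathrm{E}_P[d]$. In each of the two settings assume $c>a\,\widetilde{\mathrm{E}}_P[d]$ and $\widetilde{\mathrm{E}}_P[\theta]=\mathrm{E}_P[\theta]$; the type marginals of $P$ and $P'$ coincide and put positive probability on $\theta>0$. A strategy is a bounded measurable $x:\Theta\times D\to[0,\infty)$, used by all agents; in the friend game of a setting, an agent of type $\theta_i$ and degree $d_i$ choosing $y\ge0$ when others use $x$ gets $EU^{friend}(y;\theta_i,d_i;x)=\theta_i y+a\,y\,d_i\widetilde{\mathrm{E}}_P[x(\theta,d)]-\frac{c}{2}y^2+\phi(n-1)\mathrm{E}_P[x(\theta,d)]$. A Bayesian equilibrium is a strategy $x$ such that for every $(\theta_i,d_i)$, $x(\theta_i,d_i)$ maximizes this payoff over $y\ge0$ given others use $x$; it exists and is unique, and is denoted $x^{friend}_{a,c,P}$. Let $U^{friend}_{a,c,P}(\theta_i,d_i)=EU^{friend}(x^{friend}_{a,c,P}(\theta_i,d_i);\theta_i,d_i;x^{friend}_{a,c,P})$. $\ge_{FOSD}$ denotes first-order stochastic dominance.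 *)

theory Defs
  imports "HOL-Analysis.Analysis" "HOL-Probability.Probability"
begin

definition Dset :: "nat \<Rightarrow> nat set" where
  "Dset n = {1..n-1}"

text \<open>Expectation under P (P is a measure on type x degree).\<close>
definition Ex :: "(real \<times> nat) measure \<Rightarrow> (real \<Rightarrow> nat \<Rightarrow> real) \<Rightarrow> real" where
  "Ex P h = (\<integral>z. h (fst z) (snd z) \<partial>P)"

text \<open>Expectation under the neighbor distribution P-tilde.\<close>
definition Ex_nb :: "(real \<times> nat) measure \<Rightarrow> (real \<Rightarrow> nat \<Rightarrow> real) \<Rightarrow> real" where
  "Ex_nb P h = Ex P (\<lambda>\<theta> d. real d * h \<theta> d) / Ex P (\<lambda>\<theta> d. real d)"

definition setting :: "nat \<Rightarrow> real set \<Rightarrow> real \<Rightarrow> real \<Rightarrow> (real \<times> nat) measure \<Rightarrow> bool" where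
  "setting n \<Theta> a c P \<longleftrightarrow>
     a > 0 \<and> c > 0 \<and> prob_space P \<and>
     sets P = sets (borel \<Otimes>\<^sub>M count_space UNIV) \<and>
     measure P (\<Theta> \<times> Dset n) = 1 \<and>
     c > a * Ex_nb P (\<lambda>\<theta> d. real d) \<and>
     Ex_nb P (\<lambda>\<theta> d. \<theta>) = Ex P (\<lambda>\<theta> d. \<theta>)"

text \<open>Strategies: bounded measurable nonnegative functions on Theta x D
  (normalised to 0 outside Theta x D, since HOL functions are total).\<close>
definition strategy :: "nat \<Rightarrow> real set \<Rightarrow> (real \<times> nat) measure \<Rightarrow> (real \<Rightarrow> nat \<Rightarrow> real) \<Rightarrow> bool" where
  "strategy n \<Theta> P x \<longleftrightarrow>
     (\<lambda>z. x (fst z) (snd z)) \<in> borel_measurable P \<and>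
     (\<exists>B. \<forall>\<theta>\<in>\<Theta>. \<forall>d\<in>Dset n. x \<theta> d \<le> B) \<and>
     (\<forall>\<theta>\<in>\<Theta>. \<forall>d\<in>Dset n. 0 \<le> x \<theta> d) \<and>
     (\<forall>\<theta> d. (\<theta>, d) \<notin> \<Theta> \<times> Dset n \<longrightarrow> x \<theta> d = 0)"

definition EU_friend :: "nat \<Rightarrow> real \<Rightarrow> real \<Rightarrow> real \<Rightarrow> (real \<times> nat) measure \<Rightarrow>
    real \<Rightarrow> real \<Rightarrow> nat \<Rightarrow> (real \<Rightarrow> nat \<Rightarrow> real) \<Rightarrow> real" where
  "EU_friend n \<phi> a c P y \<theta>i di x =
     \<theta>i * y + a * y * real di * Ex_nb P x - c / 2 * y ^ 2 + \<phi> * (real n - 1) * Ex P x"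

definition is_friend_eq :: "nat \<Rightarrow> real set \<Rightarrow> real \<Rightarrow> real \<Rightarrow> real \<Rightarrow> (real \<times> nat) measure \<Rightarrow>
    (real \<Rightarrow> nat \<Rightarrow> real) \<Rightarrow> bool" where
  "is_friend_eq n \<Theta> \<phi> a c P x \<longleftrightarrow> strategy n \<Theta> P x \<and>
     (\<forall>\<theta>i\<in>\<Theta>. \<forall>di\<in>Dset n. \<forall>y\<ge>0.
        EU_friend n \<phi> a c P y \<theta>i di x \<le> EU_friend n \<phi> a c P (x \<theta>i di) \<theta>i di x)"

definition x_friend :: "nat \<Rightarrow> real set \<Rightarrow> real \<Rightarrow> real \<Rightarrow> real \<Rightarrow> (real \<times> nat) measure \<Rightarrow>
    real \<Rightarrow> nat \<Rightarrow> real" where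
  "x_friend n \<Theta> \<phi> a c P = (THE x. is_friend_eq n \<Theta> \<phi> a c P x)"

definition U_friend :: "nat \<Rightarrow> real set \<Rightarrow> real \<Rightarrow> real \<Rightarrow> real \<Rightarrow> (real \<times> nat) measure \<Rightarrow>
    real \<Rightarrow> nat \<Rightarrow> real" where
  "U_friend n \<Theta> \<phi> a c P \<theta>i di =
     EU_friend n \<phi> a c P (x_friend n \<Theta> \<phi> a c P \<theta>i di) \<theta>i di (x_friend n \<Theta> \<phi> a c P)"

definition fosd_nb :: "(real \<times> nat) measure \<Rightarrow> (real \<times> nat) measure \<Rightarrow> bool" where
  "fosd_nb P P' \<longleftrightarrow> (\<forall>k. Ex_nb P (\<lambda>\<theta> d. if k \<le> d then 1 else 0)
                        \<ge> Ex_nb P' (\<lambda>\<theta> d. if k \<le> d then 1 else 0))"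

definition strict_fosd_nb :: "(real \<times> nat) measure \<Rightarrow> (real \<times> nat) measure \<Rightarrow> bool" where
  "strict_fosd_nb P P' \<longleftrightarrow> fosd_nb P P' \<and>
     (\<exists>k. Ex_nb P (\<lambda>\<theta> d. if k \<le> d then 1 else 0)
          > Ex_nb P' (\<lambda>\<theta> d. if k \<le> d then 1 else 0))"

text \<open>The degree marginal of P is a mean-preserving spread of that of P'
  (convex order: E_P f(d) >= E_P' f(d) for all convex f).\<close>
definition mps_deg :: "(real \<times> nat) measure \<Rightarrow> (real \<times> nat) measure \<Rightarrow> bool" where
  "mps_deg P P' \<longleftrightarrow> (\<forall>f. convex_on UNIV f \<longrightarrow>
      Ex P (\<lambda>\<theta> d. f (real d)) \<ge> Ex P' (\<lambda>\<theta> d. f (real d)))"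

definition strict_mps_deg :: "(real \<times> nat) measure \<Rightarrow> (real \<times> nat) measure \<Rightarrow> bool" where
  "strict_mps_deg P P' \<longleftrightarrow> mps_deg P P' \<and>
     (\<exists>k. measure P {z \<in> space P. snd z = k} \<noteq> measure P' {z \<in> space P'. snd z = k})"

end

theory Submission
  imports Defs
begin


context
  fixes n :: nat and \<Theta> :: "real set" and a c :: real and P :: "(real \<times> nat) measure"
  assumes S: "setting n \<Theta> a c P" and Tc: "compact \<Theta>" and T0: "\<Theta> \<subseteq> {0..}"
begin

lemma ps: "prob_space P" using S by (simp add: setting_def)
lemma sP: "sets P = sets (borel \<Otimes>\<^sub>M count_space UNIV)" using S by (simp add: setting_def)

lemma mcong: "f \<in> borel_measurable P \<longleftrightarrow> f \<in> borel_measurable (borel \<Otimes>\<^sub>M count_space UNIV)"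
  by (simp add: measurable_cong_sets[OF sP])

lemma meas_fun: assumes "\<And>d. (\<lambda>t. h t d) \<in> borel_measurable borel"
  shows "(\<lambda>z. h (fst z) (snd z)) \<in> borel_measurable P"
  unfolding mcong
  by (rule measurable_compose_countable[where f="\<lambda>d z. h (fst z) d"]) (auto intro: measurable_compose[OF measurable_fst assms])

lemma TD_sets: "\<Theta> \<times> Dset n \<in> sets P"
  unfolding sP using Tc by (auto intro!: pair_measureI borel_closed compact_imp_closed)

lemma AE_TD: "AE z in P. fst z \<in> \<Theta> \<and> snd z \<in> Dset n"
proof -
  interpret prob_space P by (rule ps)
  have "measure P (\<Theta> \<times> Dset n) = 1" using S by (simp add: setting_def)
  hence "AE z in P. z \<in> \<Theta> \<times> Dset n" using TD_sets by (simp add: prob_eq_1)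
  thus ?thesis by (auto simp: mem_Times_iff)
qed

lemma intg: assumes m: "(\<lambda>z. h (fst z) (snd z)) \<in> borel_measurable P"
  and b: "\<forall>t\<in>\<Theta>. \<forall>d\<in>Dset n. \<bar>h t d\<bar> \<le> (K::real)"
  shows "integrable P (\<lambda>z. h (fst z) (snd z))"
proof -
  interpret prob_space P by (rule ps)
  show ?thesis
    by (rule integrable_const_bound[where B=K]) (use AE_TD b m in \<open>auto elim!: AE_mp\<close>)
qed

lemma Ex_cong: assumes "(\<lambda>z. h (fst z) (snd z)) \<in> borel_measurable P"
  "(\<lambda>z. g (fst z) (snd z)) \<in> borel_measurable P"
  "\<forall>t\<in>\<Theta>. \<forall>d\<in>Dset n. h t d = g t d"
  shows "Ex P h = Ex P g"
  unfolding Ex_def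
  by (rule integral_cong_AE) (use assms AE_TD in \<open>auto elim!: AE_mp\<close>)

lemma Tbound: obtains B where "\<forall>t\<in>\<Theta>. \<bar>t\<bar> \<le> B"
  using compact_imp_bounded[OF Tc] by (auto simp: bounded_iff)

lemma dbound: "d \<in> Dset n \<Longrightarrow> 1 \<le> real d \<and> real d \<le> real n"
  by (auto simp: Dset_def)

lemma m_t: "(\<lambda>z. fst z) \<in> borel_measurable P" using meas_fun[of "\<lambda>t d. t"] by simp
lemma m_d: "(\<lambda>z. real (snd z)) \<in> borel_measurable P" using meas_fun[of "\<lambda>t d. real d"] by simp

lemma int_t: "integrable P (\<lambda>z. fst z)"
proof -
  obtain B where "\<forall>t\<in>\<Theta>. \<bar>t\<bar> \<le> B" using Tbound by blast
  thus ?thesis using intg[of "\<lambda>t d. t" B] m_t by simp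
qed

lemma int_d: "integrable P (\<lambda>z. real (snd z))"
  using intg[of "\<lambda>t d. real d" "real n"] m_d dbound by auto

lemma Ed_ge1: "Ex P (\<lambda>t d. real d) \<ge> 1"
proof -
  interpret prob_space P by (rule ps)
  have "(\<integral>z. 1 \<partial>P) \<le> (\<integral>z. real (snd z) \<partial>P)"
    by (rule integral_mono_AE) (use int_d AE_TD dbound in \<open>auto elim!: AE_mp\<close>)
  thus ?thesis by (simp add: Ex_def prob_space)
qed

lemma int_dt: "integrable P (\<lambda>z. real (snd z) * fst z)"
proof -
  obtain B where B: "\<forall>t\<in>\<Theta>. \<bar>t\<bar> \<le> B" using Tbound by blast
  have "\<forall>t\<in>\<Theta>. \<forall>d\<in>Dset n. \<bar>real d * t\<bar> \<le> real n * B"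
  proof (intro ballI)
    fix t d assume "t \<in> \<Theta>" "d \<in> Dset n"
    hence "\<bar>t\<bar> \<le> B" "real d \<le> real n" "0 \<le> real d" using B dbound by auto
    thus "\<bar>real d * t\<bar> \<le> real n * B" by (simp add: abs_mult mult_mono)
  qed
  thus ?thesis using intg[of "\<lambda>t d. real d * t" "real n * B"] m_t m_d by simp
qed

lemma int_dd: "integrable P (\<lambda>z. real (snd z) * real (snd z))"
proof -
  have "\<forall>t\<in>\<Theta>. \<forall>d\<in>Dset n. \<bar>real d * real d\<bar> \<le> real n * real n"
    using dbound by (auto intro!: mult_mono)
  thus ?thesis using intg[of "\<lambda>t d. real d * real d" "real n * real n"] m_d by simp
qed

lemma Enb_lin:
  assumes mx: "(\<lambda>z. x (fst z) (snd z)) \<in> borel_measurable P"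
    and eq: "\<forall>t\<in>\<Theta>. \<forall>d\<in>Dset n. x t d = (t + a * real d * Y) / c"
  shows "Ex_nb P x = (Ex_nb P (\<lambda>t d. t) + a * Y * Ex_nb P (\<lambda>t d. real d)) / c"
proof -
  have "Ex P (\<lambda>t d. real d * x t d) = Ex P (\<lambda>t d. (real d * t + a * Y * (real d * real d)) / c)"
    by (rule Ex_cong) (use mx m_d m_t eq in \<open>auto simp: field_simps\<close>)
  also have "\<dots> = (Ex P (\<lambda>t d. real d * t) + a * Y * Ex P (\<lambda>t d. real d * real d)) / c"
    unfolding Ex_def using int_dt int_dd by simp
  finally have e: "Ex P (\<lambda>t d. real d * x t d) = (Ex P (\<lambda>t d. real d * t) + a * Y * Ex P (\<lambda>t d. real d * real d)) / c" .
  have E: "Ex P (\<lambda>t d. real d) \<noteq> 0" using Ed_ge1 by linarith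
  show ?thesis unfolding Ex_nb_def e using E by (simp add: field_simps)
qed

lemma T_nonneg: "Ex_nb P (\<lambda>t d. t) \<ge> 0"
proof -
  have "Ex_nb P (\<lambda>t d. t) = Ex P (\<lambda>t d. t)" using S by (simp add: setting_def)
  also have "\<dots> \<ge> 0" unfolding Ex_def
    by (rule integral_nonneg_AE) (use AE_TD T0 in \<open>auto elim!: AE_mp\<close>)
  finally show ?thesis .
qed

lemma cam: "c - a * Ex_nb P (\<lambda>t d. real d) > 0" using S by (simp add: setting_def)
lemma a_pos: "a > 0" using S by (simp add: setting_def)
lemma c_pos: "c > 0" using S by (simp add: setting_def)

lemma EU_eq: "EU_friend n \<phi> a c P y t d x =
   (t + a * real d * Ex_nb P x)^2 / (2*c) - c/2 * (y - (t + a * real d * Ex_nb P x)/c)^2 + \<phi> * (real n - 1) * Ex P x"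
  using c_pos unfolding EU_friend_def by (simp add: field_simps power2_eq_square)

lemma eq_iff:
  "is_friend_eq n \<Theta> \<phi> a c P x \<longleftrightarrow>
    x = (\<lambda>t d. if t \<in> \<Theta> \<and> d \<in> Dset n then
       (t + a * real d * (Ex_nb P (\<lambda>t d. t) / (c - a * Ex_nb P (\<lambda>t d. real d)))) / c else 0)"
  (is "_ \<longleftrightarrow> x = ?xs")
proof -
  define T where "T = Ex_nb P (\<lambda>t d. t)"
  define m where "m = Ex_nb P (\<lambda>t d. real d)"
  define X where "X = T / (c - a * m)"
  have cam': "c - a * m > 0" using cam m_def by simp
  have X0: "X \<ge> 0" unfolding X_def using T_nonneg cam' T_def by simp
  have Xeq: "(T + a * X * m) / c = X" using cam' c_pos unfolding X_def by (simp add: field_simps)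
  define xs where "xs = (\<lambda>t d. if t \<in> \<Theta> \<and> d \<in> Dset n then (t + a * real d * X) / c else 0)"
  have xs_eq: "?xs = xs" unfolding xs_def X_def T_def m_def ..
  have Tb: "\<Theta> \<in> sets borel" using Tc by (simp add: borel_closed compact_imp_closed)
  have mxs: "(\<lambda>z. xs (fst z) (snd z)) \<in> borel_measurable P"
  proof (rule meas_fun)
    fix d :: nat
    show "(\<lambda>t. xs t d) \<in> borel_measurable borel" unfolding xs_def
      by (cases "d \<in> Dset n") (use Tb in \<open>auto intro!: measurable_If_set\<close>)
  qed
  have Exs: "Ex_nb P xs = X"
  proof -
    have "\<forall>t\<in>\<Theta>. \<forall>d\<in>Dset n. xs t d = (t + a * real d * X) / c" by (simp add: xs_def)
    from Enb_lin[OF mxs this] Xeq show ?thesis unfolding T_def m_def by simp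
  qed

  show ?thesis unfolding xs_eq
  proof
    assume eqx: "x = xs"
    obtain B where B: "\<forall>t\<in>\<Theta>. \<bar>t\<bar> \<le> B" using Tbound by blast
    have st: "strategy n \<Theta> P xs"
      unfolding strategy_def
    proof (intro conjI)
      show "(\<lambda>z. xs (fst z) (snd z)) \<in> borel_measurable P" by (rule mxs)
      show "\<exists>K. \<forall>t\<in>\<Theta>. \<forall>d\<in>Dset n. xs t d \<le> K"
      proof (intro exI ballI)
        fix t d assume td: "t \<in> \<Theta>" "d \<in> Dset n"
        have "t + a * real d * X \<le> B + a * real n * X"
          using B td dbound[OF td(2)] a_pos X0 by (auto intro!: add_mono mult_left_mono mult_right_mono)
        thus "xs t d \<le> (B + a * real n * X) / c" using td c_pos
          by (simp add: xs_def divide_right_mono)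
      qed
      show "\<forall>t\<in>\<Theta>. \<forall>d\<in>Dset n. 0 \<le> xs t d" unfolding xs_def
         using T0 X0 a_pos c_pos by auto
      show "\<forall>t d. (t, d) \<notin> \<Theta> \<times> Dset n \<longrightarrow> xs t d = 0" unfolding xs_def by auto
    qed
    show "is_friend_eq n \<Theta> \<phi> a c P x"
      unfolding is_friend_eq_def eqx
    proof (intro conjI st ballI allI impI)
      fix t d and y :: real assume td: "t \<in> \<Theta>" "d \<in> Dset n" and "0 \<le> y"
      have "xs t d = (t + a * real d * Ex_nb P xs) / c" using td Exs by (simp add: xs_def)
      thus "EU_friend n \<phi> a c P y t d xs \<le> EU_friend n \<phi> a c P (xs t d) t d xs"
        unfolding EU_eq using c_pos by simp
    qed
  next
    assume E: "is_friend_eq n \<Theta> \<phi> a c P x"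
    hence st: "strategy n \<Theta> P x" by (simp add: is_friend_eq_def)
    define Y where "Y = Ex_nb P x"
    have xnn: "x t d \<ge> 0" for t d using st unfolding strategy_def by (cases "t \<in> \<Theta> \<and> d \<in> Dset n") auto
    have Y0: "Y \<ge> 0" unfolding Y_def Ex_nb_def Ex_def
      by (intro divide_nonneg_nonneg integral_nonneg_AE AE_I2) (auto intro!: mult_nonneg_nonneg xnn)
    have xv: "\<forall>t\<in>\<Theta>. \<forall>d\<in>Dset n. x t d = (t + a * real d * Y) / c"
    proof (intro ballI)
      fix t d assume td: "t \<in> \<Theta>" "d \<in> Dset n"
      let ?v = "(t + a * real d * Y) / c"
      have "?v \<ge> 0" using T0 td a_pos c_pos Y0 by auto
      hence "EU_friend n \<phi> a c P ?v t d x \<le> EU_friend n \<phi> a c P (x t d) t d x"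
        using E td unfolding is_friend_eq_def by blast
      hence "c/2 * (x t d - ?v)^2 \<le> 0" unfolding EU_eq Y_def by simp
      moreover have "c/2 * (x t d - ?v)^2 \<ge> 0" using c_pos by simp
      ultimately have "c/2 * (x t d - ?v)^2 = 0" by linarith
      thus "x t d = ?v" using c_pos by simp
    qed
    have "Y = (T + a * Y * m) / c" unfolding Y_def T_def m_def
      using Enb_lin[OF _ xv[unfolded Y_def]] st unfolding strategy_def by simp
    hence "Y * (c - a * m) = T" using c_pos by (simp add: field_simps)
    hence YX: "Y = X" unfolding X_def using cam' by (simp add: field_simps)
    show "x = xs"
    proof (intro ext)
      fix t d show "x t d = xs t d" unfolding xs_def
        using xv st YX  strategy_def by (cases "t \<in> \<Theta> \<and> d \<in> Dset n") auto
    qed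
  qed
qed

lemma int_C: "integrable P (\<lambda>z. max 0 (real (snd z) - s))"
proof -
  have "\<forall>t\<in>\<Theta>. \<forall>d\<in>Dset n. \<bar>max 0 (real d - s)\<bar> \<le> real n + \<bar>s\<bar>"
    using dbound by fastforce
  thus ?thesis using intg[of "\<lambda>t d. max 0 (real d - s)" "real n + \<bar>s\<bar>"] meas_fun[of "\<lambda>t d. max 0 (real d - s)"]
    by simp
qed

lemma Ex_zero: "Ex P (\<lambda>t d. 0) = 0" by (simp add: Ex_def)

lemma EC_high: assumes "s \<ge> real n - 1" shows "Ex P (\<lambda>t d. max 0 (real d - s)) = 0"
proof -
  have "Ex P (\<lambda>t d. max 0 (real d - s)) = Ex P (\<lambda>t d. 0)"
    by (rule Ex_cong) (use meas_fun[of "\<lambda>t d. max 0 (real d - s)"] assms in \<open>auto simp: Dset_def\<close>)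
  thus ?thesis by (simp add: Ex_zero)
qed

lemma EC_low: assumes "s \<le> 1" shows "Ex P (\<lambda>t d. max 0 (real d - s)) = Ex P (\<lambda>t d. real d) - s"
proof -
  interpret prob_space P by (rule ps)
  have "Ex P (\<lambda>t d. max 0 (real d - s)) = Ex P (\<lambda>t d. real d - s)"
    by (rule Ex_cong) (use meas_fun[of "\<lambda>t d. max 0 (real d - s)"] meas_fun[of "\<lambda>t d. real d - s"] assms in \<open>auto simp: Dset_def\<close>)
  also have "\<dots> = Ex P (\<lambda>t d. real d) - s" unfolding Ex_def using int_d by (simp add: prob_space)
  finally show ?thesis .
qed

lemma Ex_point: "measure P {z \<in> space P. snd z = k} =
   Ex P (\<lambda>t d. max 0 (real d - (real k - 1))) - 2 * Ex P (\<lambda>t d. max 0 (real d - real k))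
   + Ex P (\<lambda>t d. max 0 (real d - (real k + 1)))"
proof -
  have pw: "(if d = k then 1 else 0) = max 0 (real d - (real k - 1)) - 2 * max 0 (real d - real k) + max 0 (real d - (real k + 1))" for d :: nat
    by (cases "d < k"; cases "d = k") auto
  have "measure P {z \<in> space P. snd z = k} = (\<integral>z. indicator {z. snd z = k} z \<partial>P)"
    by (simp add: Int_def conj_commute)
  also have "\<dots> = (\<integral>z. max 0 (real (snd z) - (real k - 1)) - 2 * max 0 (real (snd z) - real k) + max 0 (real (snd z) - (real k + 1)) \<partial>P)"
    by (rule Bochner_Integration.integral_cong[OF refl]) (simp add: indicator_def pw[symmetric])
  also have "\<dots> = Ex P (\<lambda>t d. max 0 (real d - (real k - 1))) - 2 * Ex P (\<lambda>t d. max 0 (real d - real k))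
   + Ex P (\<lambda>t d. max 0 (real d - (real k + 1)))" unfolding Ex_def using int_C by simp
  finally show ?thesis .
qed

lemma sum_C_nat: "(d::nat) \<le> N + 1 \<Longrightarrow> 2 * (\<Sum>s\<in>{1..N}. (d - s)) = d * d - d"
proof (induction d)
  case 0 thus ?case by simp
next
  case (Suc d)
  have "(\<Sum>s\<in>{1..N}. (Suc d - s)) = (\<Sum>s\<in>{1..N}. (d - s) + (if s \<le> d then 1 else 0))"
    by (rule sum.cong) auto
  also have "\<dots> = (\<Sum>s\<in>{1..N}. (d - s)) + (\<Sum>s\<in>{1..N}. (if s \<le> d then 1 else 0))"
    by (rule sum.distrib)
  also have "(\<Sum>s\<in>{1..N}. (if s \<le> d then 1 else 0::nat)) = card {s\<in>{1..N}. s \<le> d}"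
    by (simp add: sum.If_cases; rule arg_cong[where f=card]; auto)
  also have "{s\<in>{1..N}. s \<le> d} = {1..d}" using Suc.prems by auto
  finally have "(\<Sum>s\<in>{1..N}. (Suc d - s)) = (\<Sum>s\<in>{1..N}. (d - s)) + d" by simp
  hence "2 * (\<Sum>s\<in>{1..N}. (Suc d - s)) = (d * d - d) + 2 * d" using Suc by simp
  thus ?case by (simp add: algebra_simps)
qed

lemma sq_pw: assumes "d \<in> Dset n"
  shows "real d * real d = real d + 2 * (\<Sum>s\<in>{1..n-1}. max 0 (real d - real s))"
proof -
  have "d \<le> (n - 1) + 1" using assms by (auto simp: Dset_def)
  from sum_C_nat[OF this] have "real (2 * (\<Sum>s\<in>{1..n-1}. (d - s))) = real (d * d - d)" by simp
  moreover have "real (d - s) = max 0 (real d - real s)" for s by (cases "s \<le> d") auto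
  moreover have "real (d * d - d) = real d * real d - real d"
    using le_square[of d] by (simp add: of_nat_diff)
  ultimately show ?thesis by simp
qed

lemma E_sq: "Ex P (\<lambda>t d. real d * real d) = Ex P (\<lambda>t d. real d) + 2 * (\<Sum>s\<in>{1..n-1}. Ex P (\<lambda>t d. max 0 (real d - real s)))"
proof -
  have "Ex P (\<lambda>t d. real d * real d) = Ex P (\<lambda>t d. real d + 2 * (\<Sum>s\<in>{1..n-1}. max 0 (real d - real s)))"
    by (rule Ex_cong) (use meas_fun[of "\<lambda>t d. real d * real d"] meas_fun[of "\<lambda>t d. real d + 2 * (\<Sum>s\<in>{1..n-1}. max 0 (real d - real s))"] sq_pw in auto)
  also have "\<dots> = Ex P (\<lambda>t d. real d) + 2 * (\<Sum>s\<in>{1..n-1}. Ex P (\<lambda>t d. max 0 (real d - real s)))"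
    unfolding Ex_def using int_d int_C by (simp add: integral_sum)
  finally show ?thesis .
qed

lemma ind_pw: "d \<in> Dset n \<Longrightarrow> real d = (\<Sum>k\<in>{1..n-1}. if k \<le> d then 1 else 0)"
proof -
  assume d: "d \<in> Dset n"
  have "(\<Sum>k\<in>{1..n-1}. if k \<le> d then 1 else 0::real) = real (card {k\<in>{1..n-1}. k \<le> d})"
    by (simp add: sum.If_cases Int_def conj_commute)
  also have "{k\<in>{1..n-1}. k \<le> d} = {1..d}" using d by (auto simp: Dset_def)
  finally show ?thesis by simp
qed

lemma int_dind: "integrable P (\<lambda>z. real (snd z) * (if k \<le> snd z then 1 else 0))"
proof -
  have "\<forall>t\<in>\<Theta>. \<forall>d\<in>Dset n. \<bar>real d * (if k \<le> d then 1 else 0)\<bar> \<le> real n"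
    using dbound by auto
  thus ?thesis using intg[of "\<lambda>t d. real d * (if k \<le> d then 1 else 0)" "real n"]
      meas_fun[of "\<lambda>t d. real d * (if k \<le> d then 1 else 0)"] by simp
qed

lemma m_sum: "Ex_nb P (\<lambda>t d. real d) = (\<Sum>k\<in>{1..n-1}. Ex_nb P (\<lambda>t d. if k \<le> d then 1 else 0))"
proof -
  have "Ex P (\<lambda>t d. real d * real d) = Ex P (\<lambda>t d. \<Sum>k\<in>{1..n-1}. real d * (if k \<le> d then 1 else 0))"
    by (rule Ex_cong) (use meas_fun[of "\<lambda>t d. real d * real d"] meas_fun[of "\<lambda>t d. \<Sum>k\<in>{1..n-1}. real d * (if k \<le> d then 1 else 0)"] ind_pw in \<open>auto simp: sum_distrib_left[symmetric]\<close>)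
  also have "\<dots> = (\<Sum>k\<in>{1..n-1}. Ex P (\<lambda>t d. real d * (if k \<le> d then 1 else 0)))"
    unfolding Ex_def using int_dind by (simp add: integral_sum)
  finally have e: "Ex P (\<lambda>t d. real d * real d) = (\<Sum>k\<in>{1..n-1}. Ex P (\<lambda>t d. real d * (if k \<le> d then 1 else 0)))" .
  show ?thesis by (simp only: Ex_nb_def e sum_divide_distrib)
qed

lemma ind0: "Ex_nb P (\<lambda>t d. if 0 \<le> d then 1 else 0) = 1"
  using Ed_ge1 by (simp add: Ex_nb_def)

lemma indn: assumes "k \<ge> n" shows "Ex_nb P (\<lambda>t d. if k \<le> d then 1 else 0) = 0"
proof -
  have "Ex P (\<lambda>t d. real d * (if k \<le> d then 1 else 0)) = Ex P (\<lambda>t d. 0)"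
    by (rule Ex_cong) (use meas_fun[of "\<lambda>t d. real d * (if k \<le> d then 1 else 0)"] assms in \<open>auto simp: Dset_def\<close>)
  thus ?thesis by (simp add: Ex_nb_def Ex_zero)
qed

lemma Ex_nb_d: "Ex_nb P (\<lambda>t d. real d) = Ex P (\<lambda>t d. real d * real d) / Ex P (\<lambda>t d. real d)"
  by (simp add: Ex_nb_def)

lemma T_fst: "Ex_nb P (\<lambda>t d. t) = (\<integral>u. u \<partial>(distr P borel fst))"
proof -
  have "Ex_nb P (\<lambda>t d. t) = Ex P (\<lambda>t d. t)" using S by (simp add: setting_def)
  also have "\<dots> = (\<integral>u. u \<partial>(distr P borel fst))" unfolding Ex_def
    by (subst integral_distr) (use m_t in auto)
  finally show ?thesis .
qed

lemma T_pos: assumes pos: "measure P {z \<in> space P. fst z > 0} > 0"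
  shows "Ex_nb P (\<lambda>t d. t) > 0"
proof -
  have e: "Ex_nb P (\<lambda>t d. t) = (\<integral>z. fst z \<partial>P)" using S by (simp add: setting_def Ex_def)
  have nn: "AE z in P. 0 \<le> fst z" using AE_TD T0 by (auto elim!: AE_mp)
  have Ns: "{z \<in> space P. fst z > 0} \<in> sets P" using m_t by measurable
  { assume "(\<integral>z. fst z \<partial>P) = 0"
    hence "AE z in P. fst z = 0" using integral_nonneg_eq_0_iff_AE[OF int_t nn] by simp
    hence "AE z in P. z \<notin> {z \<in> space P. fst z > 0}" by (auto elim!: AE_mp)
    hence "{z \<in> space P. fst z > 0} \<in> null_sets P" using AE_iff_null_sets[OF Ns] by simp
    hence "measure P {z \<in> space P. fst z > 0} = 0" by (rule measure_eq_0_null_sets)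
    hence False using pos by simp }
  moreover have "(\<integral>z. fst z \<partial>P) \<ge> 0" by (rule integral_nonneg_AE[OF nn])
  ultimately show ?thesis using e by fastforce
qed

lemma xf_eq: "x_friend n \<Theta> \<phi> a c P = (\<lambda>t d. if t \<in> \<Theta> \<and> d \<in> Dset n then
       (t + a * real d * (Ex_nb P (\<lambda>t d. t) / (c - a * Ex_nb P (\<lambda>t d. real d)))) / c else 0)"
  unfolding x_friend_def eq_iff by simp

lemma Xf: "Ex_nb P (x_friend n \<Theta> \<phi> a c P) = Ex_nb P (\<lambda>t d. t) / (c - a * Ex_nb P (\<lambda>t d. real d))"
proof -
  have "is_friend_eq n \<Theta> \<phi> a c P (x_friend n \<Theta> \<phi> a c P)" unfolding eq_iff xf_eq ..
  hence m: "(\<lambda>z. x_friend n \<Theta> \<phi> a c P (fst z) (snd z)) \<in> borel_measurable P"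
    by (simp add: is_friend_eq_def strategy_def)
  have "\<forall>t\<in>\<Theta>. \<forall>d\<in>Dset n. x_friend n \<Theta> \<phi> a c P t d = (t + a * real d * (Ex_nb P (\<lambda>t d. t) / (c - a * Ex_nb P (\<lambda>t d. real d)))) / c"
    by (simp add: xf_eq)
  from Enb_lin[OF m this] have e: "Ex_nb P (x_friend n \<Theta> \<phi> a c P) = (Ex_nb P (\<lambda>t d. t) + a * (Ex_nb P (\<lambda>t d. t) / (c - a * Ex_nb P (\<lambda>t d. real d))) * Ex_nb P (\<lambda>t d. real d)) / c" .
  have "c - a * Ex_nb P (\<lambda>t d. real d) \<noteq> 0" using cam by simp
  then show ?thesis unfolding e using c_pos by (simp add: field_simps)
qed

lemma Uf: assumes "t \<in> \<Theta>" "d \<in> Dset n"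
  shows "U_friend n \<Theta> \<phi> a c P t d = (t + a * real d * (Ex_nb P (\<lambda>t d. t) / (c - a * Ex_nb P (\<lambda>t d. real d))))^2 / (2*c)
     + \<phi> * (real n - 1) * Ex P (x_friend n \<Theta> \<phi> a c P)"
  unfolding U_friend_def EU_eq Xf using assms by (simp add: xf_eq)

lemma xf_val: assumes "t \<in> \<Theta>" "d \<in> Dset n"
  shows "x_friend n \<Theta> \<phi> a c P t d = (t + a * real d * (Ex_nb P (\<lambda>t d. t) / (c - a * Ex_nb P (\<lambda>t d. real d)))) / c"
  using assms by (simp add: xf_eq)

end


lemma cvx_neg: "convex_on UNIV (\<lambda>x::real. -x)"
  by (rule convex_onI) (auto simp: algebra_simps)

lemma cvx_C: "convex_on UNIV (\<lambda>x::real. max 0 (x - s))"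
proof (rule convex_onI)
  fix t x y :: real assume t: "0 < t" "t < 1"
  have "(1 - t) * (x - s) \<le> (1 - t) * max 0 (x - s)" using t by (intro mult_left_mono) auto
  moreover have "t * (y - s) \<le> t * max 0 (y - s)" using t by (intro mult_left_mono) auto
  moreover have "0 \<le> (1 - t) * max 0 (x - s) + t * max 0 (y - s)" using t by auto
  moreover have e: "(1 - t) *\<^sub>R x + t *\<^sub>R y - s = (1 - t) * (x - s) + t * (y - s)" by (simp add: algebra_simps)
  ultimately show "max 0 ((1 - t) *\<^sub>R x + t *\<^sub>R y - s) \<le> (1 - t) * max 0 (x - s) + t * max 0 (y - s)"
    unfolding e max.bounded_iff by linarith
qed auto

context
  fixes n :: nat and \<Theta> :: "real set" and a c a' c' :: real and P P' :: "(real \<times> nat) measure"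
  assumes S: "setting n \<Theta> a c P" and S': "setting n \<Theta> a' c' P'"
    and Tc: "compact \<Theta>" and T0: "\<Theta> \<subseteq> {0..}"
begin

lemma mps_facts: assumes "mps_deg P P'"
  shows "Ex P (\<lambda>t d. real d) = Ex P' (\<lambda>t d. real d)"
    and "\<And>s. Ex P' (\<lambda>t d. max 0 (real d - s)) \<le> Ex P (\<lambda>t d. max 0 (real d - s))"
proof -
  have H: "\<And>f. convex_on UNIV f \<Longrightarrow> Ex P' (\<lambda>\<theta> d. f (real d)) \<le> Ex P (\<lambda>\<theta> d. f (real d))"
    using assms by (simp add: mps_deg_def)
  have c1: "convex_on UNIV (\<lambda>x::real. x)" by (simp add: convex_on_ident)
  have a1: "Ex P (\<lambda>t d. real d) \<ge> Ex P' (\<lambda>t d. real d)"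
    using H[of "\<lambda>x. x", OF c1] by simp
  have "Ex P (\<lambda>t d. - real d) \<ge> Ex P' (\<lambda>t d. - real d)"
    using H[of "\<lambda>x. - x", OF cvx_neg] by simp
  hence "Ex P (\<lambda>t d. real d) \<le> Ex P' (\<lambda>t d. real d)" by (simp add: Ex_def)
  with a1 show "Ex P (\<lambda>t d. real d) = Ex P' (\<lambda>t d. real d)" by linarith
  show "\<And>s. Ex P' (\<lambda>t d. max 0 (real d - s)) \<le> Ex P (\<lambda>t d. max 0 (real d - s))"
    subgoal for s using H[of "\<lambda>x. max 0 (x - s)", OF cvx_C] by simp done
qed

lemma m_mono: assumes "fosd_nb P P' \<or> mps_deg P P'"
  shows "Ex_nb P' (\<lambda>t d. real d) \<le> Ex_nb P (\<lambda>t d. real d)"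
  using assms
proof
  assume f: "fosd_nb P P'"
  show ?thesis unfolding m_sum[OF S Tc T0] m_sum[OF S' Tc T0]
    by (rule sum_mono) (use f in \<open>auto simp: fosd_nb_def\<close>)
next
  assume m: "mps_deg P P'"
  note mf = mps_facts[OF m]
  have "Ex P' (\<lambda>t d. real d * real d) \<le> Ex P (\<lambda>t d. real d * real d)"
    unfolding E_sq[OF S Tc T0] E_sq[OF S' Tc T0] mf(1)
    using mf(2) by (auto intro!: sum_mono)
  moreover have "Ex P' (\<lambda>t d. real d) > 0" using Ed_ge1[OF S' Tc T0] by linarith
  ultimately show ?thesis unfolding Ex_nb_d[OF S Tc T0] Ex_nb_d[OF S' Tc T0] mf(1)
    by (simp add: divide_right_mono)
qed

lemma m_strict: assumes "strict_fosd_nb P P' \<or> strict_mps_deg P P'"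
  shows "Ex_nb P' (\<lambda>t d. real d) < Ex_nb P (\<lambda>t d. real d)"
  using assms
proof
  assume sf: "strict_fosd_nb P P'"
  then obtain k where k: "Ex_nb P (\<lambda>t d. if k \<le> d then 1 else 0) > Ex_nb P' (\<lambda>t d. if k \<le> d then 1 else 0)"
    and f: "fosd_nb P P'" by (auto simp: strict_fosd_nb_def)
  have "k \<noteq> 0" using k ind0[OF S Tc T0] ind0[OF S' Tc T0] by (cases "k = 0") auto
  moreover have "\<not> k \<ge> n"
  proof
    assume "k \<ge> n"
    from indn[OF S Tc T0 this] indn[OF S' Tc T0 this] k show False by simp
  qed
  ultimately have kin: "k \<in> {1..n-1}" by auto
  show ?thesis unfolding m_sum[OF S Tc T0] m_sum[OF S' Tc T0]
    by (rule sum_strict_mono_ex1) (use f k kin in \<open>auto simp: fosd_nb_def\<close>)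
next
  assume sm: "strict_mps_deg P P'"
  hence m: "mps_deg P P'" and dif: "\<exists>k. measure P {z \<in> space P. snd z = k} \<noteq> measure P' {z \<in> space P'. snd z = k}"
    by (auto simp: strict_mps_deg_def)
  note mf = mps_facts[OF m]
  have le: "Ex_nb P' (\<lambda>t d. real d) \<le> Ex_nb P (\<lambda>t d. real d)" using m_mono m by blast
  show ?thesis
  proof (rule ccontr)
    assume "\<not> ?thesis"
    hence eqm: "Ex_nb P' (\<lambda>t d. real d) = Ex_nb P (\<lambda>t d. real d)" using le by linarith
    have Ep: "Ex P (\<lambda>t d. real d) > 0" using Ed_ge1[OF S Tc T0] by linarith
    have "Ex P (\<lambda>t d. real d * real d) = Ex P' (\<lambda>t d. real d * real d)"
      using eqm Ep unfolding Ex_nb_d[OF S Tc T0] Ex_nb_d[OF S' Tc T0] mf(1) by (simp add: field_simps)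
    hence "(\<Sum>s\<in>{1..n-1}. Ex P (\<lambda>t d. max 0 (real d - real s)) - Ex P' (\<lambda>t d. max 0 (real d - real s))) = 0"
      unfolding E_sq[OF S Tc T0] E_sq[OF S' Tc T0] mf(1) by (simp add: sum_subtractf)
    hence mid: "\<forall>s\<in>{1..n-1}. Ex P (\<lambda>t d. max 0 (real d - real s)) = Ex P' (\<lambda>t d. max 0 (real d - real s))"
      using mf(2) by (subst (asm) sum_nonneg_eq_0_iff) (auto simp: diff_le_0_iff_le)
    have C: "Ex P (\<lambda>t d. max 0 (real d - real j)) = Ex P' (\<lambda>t d. max 0 (real d - real j))" for j :: nat
    proof (cases "j = 0")
      case True thus ?thesis using EC_low[OF S Tc T0, of 0] EC_low[OF S' Tc T0, of 0] mf(1) by simp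
    next
      case False
      show ?thesis
      proof (cases "j \<ge> n")
        case True
        hence "real j \<ge> real n - 1" by simp
        thus ?thesis using EC_high[OF S Tc T0] EC_high[OF S' Tc T0] by simp
      next
        case False
        thus ?thesis using mid \<open>j \<noteq> 0\<close> by auto
      qed
    qed
    have Cm: "Ex P (\<lambda>t d. max 0 (real d - (real j - 1))) = Ex P' (\<lambda>t d. max 0 (real d - (real j - 1)))" for j :: nat
    proof (cases j)
      case 0 thus ?thesis using EC_low[OF S Tc T0, of "-1"] EC_low[OF S' Tc T0, of "-1"] mf(1) by simp
    next
      case (Suc i) thus ?thesis using C[of i] by simp
    qed
    have Cp: "Ex P (\<lambda>t d. max 0 (real d - (real j + 1))) = Ex P' (\<lambda>t d. max 0 (real d - (real j + 1)))" for j :: nat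
      using C[of "Suc j"] by (simp add: add.commute)
    have "measure P {z \<in> space P. snd z = k} = measure P' {z \<in> space P'. snd z = k}" for k
      unfolding Ex_point[OF S Tc T0] Ex_point[OF S' Tc T0] C Cm Cp ..
    with dif show False by blast
  qed
qed

end


lemma alg_x: "(c::real) \<noteq> 0 \<Longrightarrow> (t + a*D*X)/c - (t + a*D'*X)/c = (D - D') * (a*X/c)"
  by (simp add: field_simps)

lemma alg_U: "(c::real) \<noteq> 0 \<Longrightarrow> ((t + a*D*X)^2/(2*c) + K) - ((t + a*D'*X)^2/(2*c) + K) = (D - D') * (t * (a*X/c) + (D + D')/2 * ((a*X/c) * (a*X)))"
  by (simp add: field_simps power2_eq_square)

lemma m_nonneg: assumes "setting n \<Theta> a c P" "compact \<Theta>" "\<Theta> \<subseteq> {0..}"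
  shows "Ex_nb P (\<lambda>t d. real d) \<ge> 0"
proof -
  have "Ex P (\<lambda>t d. real d * real d) \<ge> 0" unfolding Ex_def
    by (intro integral_nonneg_AE AE_I2) simp
  thus ?thesis using Ed_ge1[OF assms] unfolding Ex_nb_d[OF assms] by simp
qed

theorem proposition8:
  fixes n :: nat and \<phi> a c a' c' :: real and \<Theta> :: "real set"
    and P P' :: "(real \<times> nat) measure"
  assumes n: "n \<ge> 2"
    and \<Theta>: "compact \<Theta>" "\<Theta> \<subseteq> {0..}"
    and S: "setting n \<Theta> a c P" and S': "setting n \<Theta> a' c' P'"
    and types_eq: "distr P borel fst = distr P' borel fst"
    and pos: "measure P {z \<in> space P. fst z > 0} > 0"
    and aa: "a \<ge> a'" and cc: "c \<le> c'"
    and dist: "fosd_nb P P' \<or> mps_deg P P'"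
    and strict: "a > a' \<or> c < c' \<or> strict_fosd_nb P P' \<or> strict_mps_deg P P'"
  shows "\<forall>\<theta>i\<in>\<Theta>. \<forall>di\<in>Dset n. \<forall>di'\<in>Dset n. di > di' \<longrightarrow>
     (x_friend n \<Theta> \<phi> a c P \<theta>i di - x_friend n \<Theta> \<phi> a c P \<theta>i di'
        > x_friend n \<Theta> \<phi> a' c' P' \<theta>i di - x_friend n \<Theta> \<phi> a' c' P' \<theta>i di') \<and>
     (U_friend n \<Theta> \<phi> a c P \<theta>i di - U_friend n \<Theta> \<phi> a c P \<theta>i di'
        > U_friend n \<Theta> \<phi> a' c' P' \<theta>i di - U_friend n \<Theta> \<phi> a' c' P' \<theta>i di')"
proof (intro ballI impI)
  note A = S \<Theta>(1) \<Theta>(2)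
  note A' = S' \<Theta>(1) \<Theta>(2)
  define T where "T = Ex_nb P (\<lambda>t d. t)"
  define m where "m = Ex_nb P (\<lambda>t d. real d)"
  define m' where "m' = Ex_nb P' (\<lambda>t d. real d)"
  have TT: "Ex_nb P' (\<lambda>t d. t) = T" unfolding T_def T_fst[OF A] T_fst[OF A'] types_eq ..
  have Tp: "T > 0" unfolding T_def by (rule T_pos[OF A pos])
  have ap: "a > 0" and cp: "c > 0" using a_pos[OF A] c_pos[OF A] .
  have ap': "a' > 0" and cp': "c' > 0" using a_pos[OF A'] c_pos[OF A'] .
  have Ap: "c - a * m > 0" unfolding m_def by (rule cam[OF A])
  have Ap': "c' - a' * m' > 0" unfolding m'_def by (rule cam[OF A'])
  have mm: "m' \<le> m" unfolding m_def m'_def by (rule m_mono[OF S S' \<Theta> dist])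
  have m0: "m' \<ge> 0" unfolding m'_def by (rule m_nonneg[OF A'])
  have am: "a' * m' \<le> a * m" using mm m0 aa ap by (meson mult_mono order_trans less_imp_le mult_right_mono)
  have h1: "c - a * m \<le> c' - a' * m'" using am cc by linarith
  have h2: "a' * c \<le> a * c'" using aa cc ap' cp by (intro mult_mono) auto
  have hs: "a' * c < a * c' \<or> c - a * m < c' - a' * m'"
  proof -
    { assume "a > a'" hence "a' * c < a * c'" using cc cp by (meson mult_strict_right_mono order_less_le_trans mult_left_mono less_imp_le ap) }
    moreover
    { assume "c < c'" hence "a' * c < a * c'" using aa ap' by (meson mult_strict_left_mono order_less_le_trans mult_right_mono less_imp_le cp') }
    moreover
    { assume "strict_fosd_nb P P' \<or> strict_mps_deg P P'"
      hence "m' < m" unfolding m_def m'_def by (rule m_strict[OF S S' \<Theta>])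
      hence "a * m' < a * m" using ap by simp
      moreover have "a' * m' \<le> a * m'" using aa m0 by (simp add: mult_right_mono)
      ultimately have "c - a * m < c' - a' * m'" using cc by linarith }
    ultimately show ?thesis using strict by blast
  qed
  define X where "X = T / (c - a * m)"
  define X' where "X' = T / (c' - a' * m')"
  define q where "q = a * X / c"
  define q' where "q' = a' * X' / c'"
  have h3: "a' * c * (c - a * m) < a * c' * (c' - a' * m')"
  proof -
    have p1: "0 < a' * c" using ap' cp by simp
    from hs show ?thesis
    proof
      assume "a' * c < a * c'"
      hence "a' * c * (c - a * m) < a * c' * (c - a * m)" using Ap by simp
      also have "\<dots> \<le> a * c' * (c' - a' * m')" using h1 ap cp' by simp
      finally show ?thesis .
    next
      assume "c - a * m < c' - a' * m'"
      hence "a' * c * (c - a * m) < a' * c * (c' - a' * m')" using p1 by (rule mult_strict_left_mono)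
      also have "\<dots> \<le> a * c' * (c' - a' * m')" using h2 Ap' by (simp add: mult_right_mono)
      finally show ?thesis .
    qed
  qed
  have qq: "q' < q"
  proof -
    have "q' = a' * T / (c' * (c' - a' * m'))" unfolding q'_def X'_def by (simp add: field_simps)
    moreover have "q = a * T / (c * (c - a * m))" unfolding q_def X_def by (simp add: field_simps)
    moreover have "a' * T * (c * (c - a * m)) < a * T * (c' * (c' - a' * m'))"
      using h3 Tp by (simp add: mult.assoc mult.left_commute[of T] mult.commute[of T])
    ultimately show ?thesis using cp cp' Ap Ap' by (simp add: divide_less_eq less_divide_eq frac_less_eq)
  qed
  have q'p: "q' > 0" unfolding q'_def X'_def using ap' cp' Tp Ap' by simp
  have rr: "a' * X' \<le> a * X"
  proof -
    have "a' * T * (c - a * m) \<le> a * T * (c' - a' * m')"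
      using h1 aa Tp Ap ap' by (meson mult_mono less_imp_le mult_right_mono order_trans mult_nonneg_nonneg)
    thus ?thesis unfolding X_def X'_def using Ap Ap' by (simp add: field_simps)
  qed
  have r'p: "a' * X' > 0" unfolding X'_def using ap' Tp Ap' by simp
  fix t di di' assume t: "t \<in> \<Theta>" and d: "di \<in> Dset n" and d': "di' \<in> Dset n" and dd: "di' < di"
  have t0: "t \<ge> 0" using t \<Theta>(2) by auto
  have D: "real di - real di' > 0" using dd by simp
  have xP: "x_friend n \<Theta> \<phi> a c P t di - x_friend n \<Theta> \<phi> a c P t di' = (real di - real di') * q"
    unfolding xf_val[OF A t d] xf_val[OF A t d'] q_def X_def T_def m_def by (rule alg_x) (use cp in simp)
  have xP': "x_friend n \<Theta> \<phi> a' c' P' t di - x_friend n \<Theta> \<phi> a' c' P' t di' = (real di - real di') * q'"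
    unfolding xf_val[OF A' t d] xf_val[OF A' t d'] q'_def X'_def TT m'_def by (rule alg_x) (use cp' in simp)
  have UP: "U_friend n \<Theta> \<phi> a c P t di - U_friend n \<Theta> \<phi> a c P t di' = (real di - real di') * (t * q + (real di + real di')/2 * (q * (a * X)))"
    unfolding Uf[OF A t d] Uf[OF A t d'] q_def X_def T_def m_def by (rule alg_U) (use cp in simp)
  have UP': "U_friend n \<Theta> \<phi> a' c' P' t di - U_friend n \<Theta> \<phi> a' c' P' t di' = (real di - real di') * (t * q' + (real di + real di')/2 * (q' * (a' * X')))"
    unfolding Uf[OF A' t d] Uf[OF A' t d'] q'_def X'_def TT m'_def by (rule alg_U) (use cp' in simp)
  show "x_friend n \<Theta> \<phi> a c P t di - x_friend n \<Theta> \<phi> a c P t di'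
        > x_friend n \<Theta> \<phi> a' c' P' t di - x_friend n \<Theta> \<phi> a' c' P' t di' \<and>
     U_friend n \<Theta> \<phi> a c P t di - U_friend n \<Theta> \<phi> a c P t di'
        > U_friend n \<Theta> \<phi> a' c' P' t di - U_friend n \<Theta> \<phi> a' c' P' t di'"
    unfolding xP xP' UP UP'
  proof
    show "(real di - real di') * q' < (real di - real di') * q" using D qq by simp
    have "q' * (a' * X') < q * (a * X)"
    proof -
      have "q' * (a' * X') < q * (a' * X')" using qq r'p by (rule mult_strict_right_mono)
      also have "\<dots> \<le> q * (a * X)" using rr qq q'p by (intro mult_left_mono) auto
      finally show ?thesis .
    qed
    moreover have "(real di + real di')/2 > 0" using D by simp
    ultimately have "(real di + real di')/2 * (q' * (a' * X')) < (real di + real di')/2 * (q * (a * X))" by simp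
    moreover have "t * q' \<le> t * q" using t0 qq by (intro mult_left_mono) auto
    ultimately have inner: "t * q' + (real di + real di')/2 * (q' * (a' * X')) < t * q + (real di + real di')/2 * (q * (a * X))"
      by linarith
    show "(real di - real di') * (t * q' + (real di + real di')/2 * (q' * (a' * X')))
       < (real di - real di') * (t * q + (real di + real di')/2 * (q * (a * X)))"
      by (rule mult_strict_left_mono[OF inner D])
  qed
qed

end
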